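(* Let $A>n^2$, $f\in L^1_{\mathrm{loc}}(\mathbb{R}^d;\mathbb{R}^n)$ and $Q\subset\mathbb{R}^d$ a cube. Let $\mathcal I_{Q,f}$ be the collection of maximal dyadic subcubes $I$ of $Q$ with $\langle f\rangle_I\not\subset A\langle f\rangle_Q$. Then for every $I\in\mathcal I_{Q,f}$, $\langle f\rangle_I\subset2^dA\langle f\rangle_Q$, and \[ \sum_{I\in\mathcal I_{Q,f}}|I|<\frac{n^2}{A}|Q|. \]
   Context: For a cube $Q$, $\Phi(Q)$ is the set of real functions $\varphi$ on $\mathbb{R}^d$ with $\|\varphi\|_\infty\le1$ and $\operatorname{supp}\varphi\subset Q$, and for $f\in L^1_{\mathrm{loc}}(\mathbb{R}^d;\mathbb{R}^n)$, $\langle f\rangle_Q:=\{\frac1{|Q|}\int f\varphi\,dx:\varphi\in\Phi(Q)\}\subset\mathbb{R}^n$ (a closed convex symmetric set). $tK$ denotes dilation of a set $K$ about the origin by $t$. Dyadic subcubes of $Q$ are the cubes obtained from $Q$ by repeated bisection of its sides. *)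

theory Defs
  imports "HOL-Analysis.Analysis"
begin

text \<open>Closed cube with lower corner a and side length s.\<close>
definition cube :: "'a::euclidean_space \<Rightarrow> real \<Rightarrow> 'a set" where
  "cube a s = cbox a (a + s *\<^sub>R One)"

definition is_cube :: "'a::euclidean_space set \<Rightarrow> bool" where
  "is_cube Q \<longleftrightarrow> (\<exists>a s. s > 0 \<and> Q = cube a s)"

text \<open>Dyadic subcubes of Q: obtained by k-fold bisection of the sides (k = 0 gives Q).\<close>
definition dyadic_subcube :: "'a::euclidean_space set \<Rightarrow> 'a set \<Rightarrow> bool" where
  "dyadic_subcube I Q \<longleftrightarrow> (\<exists>a s (k::nat) (j::'a \<Rightarrow> nat). s > 0 \<and> Q = cube a s \<and>
      (\<forall>i\<in>Basis. j i < 2 ^ k) \<and>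
      I = cube (a + (\<Sum>i\<in>Basis. (s / 2 ^ k * real (j i)) *\<^sub>R i)) (s / 2 ^ k))"

text \<open>f in L^1_loc: integrable on every compact set.\<close>
definition L1_loc :: "('a::euclidean_space \<Rightarrow> 'b::euclidean_space) \<Rightarrow> bool" where
  "L1_loc f \<longleftrightarrow> (\<forall>K. compact K \<longrightarrow> set_integrable lebesgue K f)"

text \<open>The convex-body average of f over Q.\<close>
definition cavg :: "('a::euclidean_space \<Rightarrow> 'b::euclidean_space) \<Rightarrow> 'a set \<Rightarrow> 'b set" where
  "cavg f Q = {(1 / measure lebesgue Q) *\<^sub>R (LINT x|lebesgue. \<phi> x *\<^sub>R f x) | \<phi>.
      \<phi> \<in> borel_measurable lebesgue \<and> (\<forall>x. \<bar>\<phi> x\<bar> \<le> 1) \<and> (\<forall>x. x \<notin> Q \<longrightarrow> \<phi> x = 0)}"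

end

theory Submission
  imports Defs "Jordan_Normal_Form.Determinant"
begin


lemma cube_sets_lborel: "cube a s \<in> sets lborel"
  unfolding cube_def by simp

lemma emeasure_cube: fixes a :: "'a::euclidean_space"
  assumes "s \<ge> 0" shows "emeasure lebesgue (cube a s) = ennreal (s ^ DIM('a))"
proof -
  have "emeasure lebesgue (cube a s) = emeasure lborel (cube a s)"
    using cube_sets_lborel[of a s] by (simp add: emeasure_completion main_part)
  also have "\<dots> = ennreal (\<Prod>b\<in>(Basis::'a set). s)"
    unfolding cube_def using assms
    by (subst emeasure_lborel_cbox) (auto simp: inner_simps algebra_simps intro!: arg_cong[where f=ennreal] prod.cong)
  also have "\<dots> = ennreal (s ^ DIM('a))" by simp
  finally show ?thesis .
qed

lemma measure_cube: fixes a :: "'a::euclidean_space"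
  assumes "s \<ge> 0" shows "measure lebesgue (cube a s) = s ^ DIM('a)"
  using emeasure_cube[OF assms, of a] assms unfolding measure_def by simp

lemma cube_compact: "compact (cube a s)" unfolding cube_def by simp
lemma cube_sets_lebesgue: "cube a s \<in> sets lebesgue" unfolding cube_def by simp



definition dcube :: "'a::euclidean_space \<Rightarrow> real \<Rightarrow> nat \<Rightarrow> ('a \<Rightarrow> nat) \<Rightarrow> 'a set" where
  "dcube a s k j = cube (a + (\<Sum>i\<in>Basis. (s / 2 ^ k * real (j i)) *\<^sub>R i)) (s / 2 ^ k)"

lemma corner_inner: assumes "b \<in> (Basis::'a::euclidean_space set)"
  shows "(a + (\<Sum>i\<in>Basis. c i *\<^sub>R i)) \<bullet> b = a \<bullet> b + c b"
  using assms by (simp add: inner_add_left inner_sum_left inner_Basis if_distrib cong: if_cong)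

lemma mem_cube: "x \<in> cube c t \<longleftrightarrow> (\<forall>i\<in>Basis. c \<bullet> i \<le> x \<bullet> i \<and> x \<bullet> i \<le> c \<bullet> i + t)"
  unfolding cube_def mem_box by (simp add: inner_simps)

lemma mem_dcube: "x \<in> dcube a s k j \<longleftrightarrow>
   (\<forall>i\<in>Basis. a \<bullet> i + s / 2 ^ k * real (j i) \<le> x \<bullet> i \<and> x \<bullet> i \<le> a \<bullet> i + s / 2 ^ k * real (j i) + s / 2 ^ k)"
  unfolding dcube_def mem_cube by (simp add: corner_inner)

lemma cube_inj: fixes a :: "'a::euclidean_space"
  assumes "s > 0" "t > 0" "cube a s = cube b t" shows "a = b \<and> s = t"
proof -
  have ne: "cbox a (a + s *\<^sub>R One) \<noteq> {}" using assms by (auto simp: box_ne_empty inner_simps)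
  have h: "a = b \<and> a + s *\<^sub>R One = b + t *\<^sub>R One"
    using assms(3) ne unfolding cube_def eq_cbox by blast
  obtain i where i: "i \<in> (Basis::'a set)" using nonempty_Basis by blast
  have "(a + s *\<^sub>R One) \<bullet> i = (b + t *\<^sub>R One) \<bullet> i" using conjunct2[OF h] by (rule arg_cong)
  with i h show ?thesis by (simp add: inner_simps)
qed

lemma dyadic_iff: fixes a :: "'a::euclidean_space"
  assumes "s > 0" "Q = cube a s"
  shows "dyadic_subcube I Q \<longleftrightarrow> (\<exists>k j. (\<forall>i\<in>Basis. j i < (2::nat) ^ k) \<and> I = dcube a s k j)"
proof
  assume "dyadic_subcube I Q"
  then obtain a' s' k j where "s' > 0" "Q = cube a' s'" "\<forall>i\<in>Basis. j i < (2::nat) ^ k"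
    "I = dcube a' s' k j" unfolding dyadic_subcube_def dcube_def by blast
  moreover have "a' = a \<and> s' = s" using cube_inj[of s' s a' a] assms calculation by auto
  ultimately show "\<exists>k j. (\<forall>i\<in>Basis. j i < (2::nat) ^ k) \<and> I = dcube a s k j" by auto
next
  assume "\<exists>k j. (\<forall>i\<in>Basis. j i < (2::nat) ^ k) \<and> I = dcube a s k j"
  then show "dyadic_subcube I Q" using assms unfolding dyadic_subcube_def dcube_def by blast
qed

lemma dcube_subset_cube: fixes a :: "'a::euclidean_space"
  assumes "s > 0" "\<forall>i\<in>Basis. j i < (2::nat) ^ k"
  shows "dcube a s k j \<subseteq> cube a s"
proof
  fix x assume x: "x \<in> dcube a s k j"
  show "x \<in> cube a s" unfolding mem_cube
  proof
    fix i :: 'a assume i: "i \<in> Basis"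
    have "j i + 1 \<le> 2 ^ k" using assms(2) i by (simp add: Suc_le_eq)
    then have "real (j i + 1) \<le> real (2 ^ k)" by (simp only: of_nat_le_iff)
    then have j: "real (j i) + 1 \<le> 2 ^ k" by simp
    have "s / 2 ^ k * real (j i) + s / 2 ^ k = s / 2 ^ k * (real (j i) + 1)" by (simp add: distrib_left)
    also have "\<dots> \<le> s / 2 ^ k * 2 ^ k" using j assms(1) by (intro mult_left_mono) auto
    also have "\<dots> = s" by simp
    finally have u: "s / 2 ^ k * real (j i) + s / 2 ^ k \<le> s" .
    have l: "0 \<le> s / 2 ^ k * real (j i)" using assms(1) by simp
    from x i show "a \<bullet> i \<le> x \<bullet> i \<and> x \<bullet> i \<le> a \<bullet> i + s" unfolding mem_dcube using u l by force
  qed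
qed

lemma measure_dcube: fixes a :: "'a::euclidean_space"
  assumes "s > 0" shows "measure lebesgue (dcube a s k j) = (s / 2 ^ k) ^ DIM('a)"
  unfolding dcube_def using assms by (intro measure_cube) auto

lemma emeasure_dcube: fixes a :: "'a::euclidean_space"
  assumes "s > 0" shows "emeasure lebesgue (dcube a s k j) = ennreal ((s / 2 ^ k) ^ DIM('a))"
  unfolding dcube_def using assms by (intro emeasure_cube) auto

lemma dcube_nested: fixes a :: "'a::euclidean_space"
  assumes "s > 0" "k \<le> l" "\<forall>i\<in>Basis. j i * 2 ^ (l - k) \<le> j' i \<and> j' i < (j i + 1) * 2 ^ (l - k)"
  shows "dcube a s l j' \<subseteq> dcube a s k j"
proof
  fix x assume x: "x \<in> dcube a s l j'"
  define t where "t = s / 2 ^ l"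
  define q :: real where "q = 2 ^ (l - k)"
  have t: "t > 0" using assms(1) by (simp add: t_def)
  have sk: "s / 2 ^ k = t * q" unfolding t_def q_def using assms(2)
    by (simp add: field_simps power_add[symmetric])
  show "x \<in> dcube a s k j" unfolding mem_dcube sk
  proof
    fix i :: 'a assume i: "i \<in> Basis"
    have "real (j i) * q \<le> real (j' i)" "real (j' i) + 1 \<le> (real (j i) + 1) * q"
    proof -
      have "j i * 2 ^ (l - k) \<le> j' i" "j' i + 1 \<le> (j i + 1) * 2 ^ (l - k)" using assms(3) i by auto
      then have "real (j i * 2 ^ (l - k)) \<le> real (j' i)" "real (j' i + 1) \<le> real ((j i + 1) * 2 ^ (l - k))"
        by (simp_all only: of_nat_le_iff)
      then show "real (j i) * q \<le> real (j' i)" "real (j' i) + 1 \<le> (real (j i) + 1) * q"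
        unfolding q_def by (simp_all add: algebra_simps)
    qed
    then have r: "t * (real (j i) * q) \<le> t * real (j' i)" "t * (real (j' i) + 1) \<le> t * ((real (j i) + 1) * q)"
      using t by (auto intro: mult_left_mono)
    have "t * q * real (j i) \<le> t * real (j' i)" using r(1) by (simp add: mult_ac)
    moreover have "t * real (j' i) + t \<le> t * q * real (j i) + t * q"
      using r(2) by (simp add: distrib_left distrib_right mult_ac)
    moreover have "a \<bullet> i + t * real (j' i) \<le> x \<bullet> i \<and> x \<bullet> i \<le> a \<bullet> i + t * real (j' i) + t"
      using x i unfolding mem_dcube t_def by auto
    ultimately show "a \<bullet> i + t * q * real (j i) \<le> x \<bullet> i \<and> x \<bullet> i \<le> a \<bullet> i + t * q * real (j i) + t * q"
      by linarith
  qed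
qed



lemma dcube_sep: fixes a :: "'a::euclidean_space"
  assumes "s > 0" "k \<le> l" "i \<in> Basis" "\<not> (j i * 2 ^ (l - k) \<le> j' i \<and> j' i < (j i + 1) * 2 ^ (l - k))"
  shows "dcube a s k j \<inter> dcube a s l j' \<in> null_sets lebesgue"
proof -
  define t where "t = s / 2 ^ l"
  define q :: real where "q = 2 ^ (l - k)"
  have t: "t > 0" using assms(1) by (simp add: t_def)
  have sk: "s / 2 ^ k = t * q" unfolding t_def q_def using assms(2)
    by (simp add: field_simps power_add[symmetric])
  have "\<exists>c. dcube a s k j \<inter> dcube a s l j' \<subseteq> {x. x \<bullet> i = c}"
  proof (cases "j' i < j i * 2 ^ (l - k)")
    case True
    then have "j' i + 1 \<le> j i * 2 ^ (l - k)" by simp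
    then have "real (j' i + 1) \<le> real (j i * 2 ^ (l - k))" by (simp only: of_nat_le_iff)
    then have "real (j' i) + 1 \<le> real (j i) * q" unfolding q_def by simp
    then have "t * (real (j' i) + 1) \<le> t * (real (j i) * q)" using t by (intro mult_left_mono) auto
    then have le: "t * real (j' i) + t \<le> t * q * real (j i)" by (simp add: distrib_left mult_ac)
    show ?thesis
    proof (intro exI subsetI)
      fix x assume x: "x \<in> dcube a s k j \<inter> dcube a s l j'"
      have x1: "a \<bullet> i + s / 2 ^ k * real (j i) \<le> x \<bullet> i" "x \<bullet> i \<le> a \<bullet> i + s / 2 ^ l * real (j' i) + s / 2 ^ l"
        using x assms(3) by (auto simp: mem_dcube)
      then have "a \<bullet> i + t * q * real (j i) \<le> x \<bullet> i" "x \<bullet> i \<le> a \<bullet> i + t * real (j' i) + t"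
        unfolding sk t_def by auto
      with le show "x \<in> {x. x \<bullet> i = a \<bullet> i + t * q * real (j i)}" by simp
    qed
  next
    case False
    then have "(j i + 1) * 2 ^ (l - k) \<le> j' i" using assms(4) by simp
    then have "real ((j i + 1) * 2 ^ (l - k)) \<le> real (j' i)" by (simp only: of_nat_le_iff)
    then have "(real (j i) + 1) * q \<le> real (j' i)" unfolding q_def by (simp add: algebra_simps)
    then have "t * ((real (j i) + 1) * q) \<le> t * real (j' i)" using t by (intro mult_left_mono) auto
    then have le: "t * q * real (j i) + t * q \<le> t * real (j' i)" by (simp add: distrib_left distrib_right mult_ac)
    show ?thesis
    proof (intro exI subsetI)
      fix x assume x: "x \<in> dcube a s k j \<inter> dcube a s l j'"
      have x1: "x \<bullet> i \<le> a \<bullet> i + s / 2 ^ k * real (j i) + s / 2 ^ k" "a \<bullet> i + s / 2 ^ l * real (j' i) \<le> x \<bullet> i"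
        using x assms(3) by (auto simp: mem_dcube)
      then have "x \<bullet> i \<le> a \<bullet> i + t * q * real (j i) + t * q" "a \<bullet> i + t * real (j' i) \<le> x \<bullet> i"
        unfolding sk t_def by auto
      with le show "x \<in> {x. x \<bullet> i = a \<bullet> i + t * q * real (j i) + t * q}" by simp
    qed
  qed
  then obtain c where "dcube a s k j \<inter> dcube a s l j' \<subseteq> {x. x \<bullet> i = c}" by blast
  then have "negligible (dcube a s k j \<inter> dcube a s l j')"
    using negligible_standard_hyperplane[OF assms(3)] negligible_subset by blast
  then show ?thesis by (simp add: negligible_iff_null_sets)
qed

lemma dcube_cases_le: fixes a :: "'a::euclidean_space"
  assumes "s > 0" "k \<le> l"
  shows "dcube a s l j' \<subseteq> dcube a s k j \<or> dcube a s k j \<inter> dcube a s l j' \<in> null_sets lebesgue"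
proof (cases "\<forall>i\<in>Basis. j i * 2 ^ (l - k) \<le> j' i \<and> j' i < (j i + 1) * 2 ^ (l - k)")
  case True
  then show ?thesis using dcube_nested[OF assms] by blast
next
  case False
  then show ?thesis using dcube_sep[OF assms] by blast
qed

lemma dyadic_cases: fixes a :: "'a::euclidean_space"
  assumes "s > 0" "Q = cube a s" "dyadic_subcube I Q" "dyadic_subcube J Q"
  shows "I \<subseteq> J \<or> J \<subseteq> I \<or> I \<inter> J \<in> null_sets lebesgue"
proof -
  obtain k j where I: "I = dcube a s k j" using assms(3) dyadic_iff[OF assms(1,2)] by blast
  obtain l j' where J: "J = dcube a s l j'" using assms(4) dyadic_iff[OF assms(1,2)] by blast
  show ?thesis
  proof (cases "k \<le> l")
    case True
    then show ?thesis using dcube_cases_le[OF assms(1) True] I J by blast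
  next
    case False
    then have lk: "l \<le> k" by simp
    show ?thesis using dcube_cases_le[OF assms(1) lk] I J by (auto simp: Int_commute)
  qed
qed

lemma dyadic_parent: fixes a :: "'a::euclidean_space"
  assumes "s > 0" "Q = cube a s" "dyadic_subcube I Q" "I \<noteq> Q"
  shows "\<exists>J. dyadic_subcube J Q \<and> I \<subseteq> J \<and> J \<noteq> I \<and>
     measure lebesgue J = 2 ^ DIM('a) * measure lebesgue I"
proof -
  obtain k j where jb: "\<forall>i\<in>Basis. j i < (2::nat) ^ k" and I: "I = dcube a s k j"
    using assms(3) dyadic_iff[OF assms(1,2)] by blast
  have "k \<noteq> 0"
  proof
    assume k: "k = 0"
    then have "\<forall>i\<in>Basis. j i = 0" using jb by auto
    then have "I = cube a s" unfolding I dcube_def k by simp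
    with assms(2,4) show False by simp
  qed
  then obtain k' where k: "k = Suc k'" by (cases k) auto
  define j' where "j' = (\<lambda>i. j i div 2)"
  have jb': "\<forall>i\<in>Basis. j' i < (2::nat) ^ k'" using jb unfolding j'_def k by auto
  have J: "dyadic_subcube (dcube a s k' j') Q" using dyadic_iff[OF assms(1,2)] jb' by blast
  have sub: "I \<subseteq> dcube a s k' j'" unfolding I
    by (rule dcube_nested[OF assms(1)]) (auto simp: k j'_def)
  have m: "measure lebesgue (dcube a s k' j') = 2 ^ DIM('a) * measure lebesgue I"
  proof -
    have "s / 2 ^ k' = 2 * (s / 2 ^ Suc k')" by simp
    then show ?thesis unfolding I measure_dcube[OF assms(1)] k by (simp only: power_mult_distrib)
  qed
  have "measure lebesgue I > 0" unfolding I measure_dcube[OF assms(1)] using assms(1) by simp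
  moreover have "(2::real) ^ DIM('a) > 1" by (rule one_less_power) auto
  ultimately have "measure lebesgue (dcube a s k' j') > measure lebesgue I" unfolding m by simp
  then have "dcube a s k' j' \<noteq> I" by auto
  with J sub m show ?thesis by blast
qed



definition adm :: "('a::euclidean_space \<Rightarrow> real) \<Rightarrow> 'a set \<Rightarrow> bool" where
  "adm \<phi> S \<longleftrightarrow> \<phi> \<in> borel_measurable lebesgue \<and> (\<forall>x. \<bar>\<phi> x\<bar> \<le> 1) \<and> (\<forall>x. x \<notin> S \<longrightarrow> \<phi> x = 0)"

lemma cavg_adm: "cavg f S = {(1 / measure lebesgue S) *\<^sub>R (LINT x|lebesgue. \<phi> x *\<^sub>R f x) | \<phi>. adm \<phi> S}"
  unfolding cavg_def adm_def by simp

lemma L1_set_integrable: "L1_loc f \<Longrightarrow> compact S \<Longrightarrow> integrable lebesgue (\<lambda>x. indicator S x *\<^sub>R f x)"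
  unfolding L1_loc_def set_integrable_def by blast

lemma adm_integrable:
  assumes "L1_loc f" "compact S" "adm \<phi> S"
  shows "integrable lebesgue (\<lambda>x. \<phi> x *\<^sub>R f x)"
proof -
  let ?g = "\<lambda>x. indicator S x *\<^sub>R f x"
  have g: "integrable lebesgue ?g" using L1_set_integrable[OF assms(1,2)] .
  have "\<phi> x *\<^sub>R f x = \<phi> x *\<^sub>R ?g x" for x
    using assms(3) unfolding adm_def by (cases "x \<in> S") auto
  then have eq: "(\<lambda>x. \<phi> x *\<^sub>R f x) = (\<lambda>x. \<phi> x *\<^sub>R ?g x)" by (rule ext)
  have "(\<lambda>x. \<phi> x *\<^sub>R ?g x) \<in> borel_measurable lebesgue"
    using borel_measurable_scaleR[OF _ borel_measurable_integrable[OF g]] assms(3) unfolding adm_def by blast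
  moreover have "norm (\<phi> x *\<^sub>R ?g x) \<le> norm (?g x)" for x
    using assms(3) unfolding adm_def by (cases "x \<in> S") (auto intro!: mult_left_le_one_le)
  then have "AE x in lebesgue. norm (\<phi> x *\<^sub>R ?g x) \<le> norm (?g x)" by (intro AE_I2)
  ultimately show ?thesis unfolding eq using Bochner_Integration.integrable_bound[OF g] by blast
qed

lemma lin_integral:
  fixes l :: "'b::euclidean_space \<Rightarrow> real"
  assumes "linear l" "integrable lebesgue (g :: 'a::euclidean_space \<Rightarrow> 'b)"
  shows "l (LINT x|lebesgue. g x) = (LINT x|lebesgue. l (g x))"
  using integral_bounded_linear[of l, OF _ assms(2)] assms(1) linear_conv_bounded_linear by metis

lemma lin_integrable:
  fixes l :: "'b::euclidean_space \<Rightarrow> real"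
  assumes "linear l" "integrable lebesgue (g :: 'a::euclidean_space \<Rightarrow> 'b)"
  shows "integrable lebesgue (\<lambda>x. l (g x))"
  using integrable_bounded_linear[of l, OF _ assms(2)] assms(1) linear_conv_bounded_linear by metis

lemma abs_lin_integrable:
  fixes l :: "'b::euclidean_space \<Rightarrow> real" and f :: "'a::euclidean_space \<Rightarrow> 'b"
  assumes "linear l" "L1_loc f" "compact S"
  shows "integrable lebesgue (\<lambda>x. indicator S x * \<bar>l (f x)\<bar>)"
proof -
  have "integrable lebesgue (\<lambda>x. indicator S x *\<^sub>R f x)" by (rule L1_set_integrable[OF assms(2,3)])
  then have "integrable lebesgue (\<lambda>x. l (indicator S x *\<^sub>R f x))" by (rule lin_integrable[OF assms(1)])
  then have "integrable lebesgue (\<lambda>x. \<bar>l (indicator S x *\<^sub>R f x)\<bar>)" by (rule integrable_abs)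
  moreover have "\<bar>l (indicator S x *\<^sub>R f x)\<bar> = indicator S x * \<bar>l (f x)\<bar>" for x
    using linear_scale[OF assms(1)] linear_0[OF assms(1)] by (cases "x \<in> S") auto
  ultimately show ?thesis by simp
qed

lemma cavg_bound:
  fixes l :: "'b::euclidean_space \<Rightarrow> real" and f :: "'a::euclidean_space \<Rightarrow> 'b"
  assumes "linear l" "L1_loc f" "compact S" "measure lebesgue S > 0" "y \<in> cavg f S"
  shows "\<bar>l y\<bar> \<le> (1 / measure lebesgue S) * (LINT x|lebesgue. indicator S x * \<bar>l (f x)\<bar>)"
proof -
  obtain \<phi> where \<phi>: "adm \<phi> S" and y: "y = (1 / measure lebesgue S) *\<^sub>R (LINT x|lebesgue. \<phi> x *\<^sub>R f x)"
    using assms(5) unfolding cavg_adm by blast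
  have int: "integrable lebesgue (\<lambda>x. \<phi> x *\<^sub>R f x)" using adm_integrable[OF assms(2,3) \<phi>] .
  have "l y = (1 / measure lebesgue S) * (LINT x|lebesgue. l (\<phi> x *\<^sub>R f x))"
    unfolding y linear_scale[OF assms(1)] lin_integral[OF assms(1) int] by simp
  also have "(LINT x|lebesgue. l (\<phi> x *\<^sub>R f x)) = (LINT x|lebesgue. \<phi> x * l (f x))"
    using linear_scale[OF assms(1)] by simp
  finally have ly: "l y = (1 / measure lebesgue S) * (LINT x|lebesgue. \<phi> x * l (f x))" .
  have "\<bar>LINT x|lebesgue. \<phi> x * l (f x)\<bar> \<le> (LINT x|lebesgue. indicator S x * \<bar>l (f x)\<bar>)"
  proof (rule integral_abs_bound_integral)
    show "integrable lebesgue (\<lambda>x. \<phi> x * l (f x))"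
      using lin_integrable[OF assms(1) int] linear_scale[OF assms(1)] by simp
    show "integrable lebesgue (\<lambda>x. indicator S x * \<bar>l (f x)\<bar>)" by (rule abs_lin_integrable[OF assms(1-3)])
    fix x show "\<bar>\<phi> x * l (f x)\<bar> \<le> indicator S x * \<bar>l (f x)\<bar>"
      using \<phi> unfolding adm_def by (cases "x \<in> S") (auto simp: abs_mult intro!: mult_left_le_one_le)
  qed
  then show ?thesis unfolding ly using assms(4) by (auto simp: abs_mult intro!: divide_right_mono)
qed

lemma cavg_sgn:
  fixes l :: "'b::euclidean_space \<Rightarrow> real" and f :: "'a::euclidean_space \<Rightarrow> 'b"
  assumes "linear l" "L1_loc f" "compact S"
  shows "\<exists>y\<in>cavg f S. l y = (1 / measure lebesgue S) * (LINT x|lebesgue. indicator S x * \<bar>l (f x)\<bar>)"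
proof -
  let ?g = "\<lambda>x. indicator S x *\<^sub>R f x"
  define \<phi> where "\<phi> x = sgn (l (?g x))" for x
  have gi: "integrable lebesgue ?g" using L1_set_integrable[OF assms(2,3)] .
  have "(\<lambda>x. l (?g x)) \<in> borel_measurable lebesgue"
    using borel_measurable_integrable[OF lin_integrable[OF assms(1) gi]] .
  then have meas: "\<phi> \<in> borel_measurable lebesgue" unfolding \<phi>_def by measurable
  have "adm \<phi> S" unfolding adm_def using meas
    by (auto simp: \<phi>_def sgn_real_def linear_0[OF assms(1)] indicator_def)
  then have "(1 / measure lebesgue S) *\<^sub>R (LINT x|lebesgue. \<phi> x *\<^sub>R f x) \<in> cavg f S"
    unfolding cavg_adm by blast
  moreover have "l ((1 / measure lebesgue S) *\<^sub>R (LINT x|lebesgue. \<phi> x *\<^sub>R f x)) =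
      (1 / measure lebesgue S) * (LINT x|lebesgue. indicator S x * \<bar>l (f x)\<bar>)"
  proof -
    have int: "integrable lebesgue (\<lambda>x. \<phi> x *\<^sub>R f x)" by (rule adm_integrable[OF assms(2,3) \<open>adm \<phi> S\<close>])
    have "\<And>x. l (\<phi> x *\<^sub>R f x) = indicator S x * \<bar>l (f x)\<bar>"
      unfolding \<phi>_def using linear_scale[OF assms(1)] linear_0[OF assms(1)]
      by (auto simp: indicator_def sgn_mult_self_eq abs_sgn)
    then show ?thesis unfolding linear_scale[OF assms(1)] lin_integral[OF assms(1) int] by simp
  qed
  ultimately show ?thesis by blast
qed

lemma cavg_sub:
  assumes "I \<subseteq> J" "measure lebesgue I > 0" "measure lebesgue J > 0"
  shows "cavg f I \<subseteq> (*\<^sub>R) (measure lebesgue J / measure lebesgue I) ` cavg f J"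
proof
  fix y assume "y \<in> cavg f I"
  then obtain \<phi> where \<phi>: "adm \<phi> I" and y: "y = (1 / measure lebesgue I) *\<^sub>R (LINT x|lebesgue. \<phi> x *\<^sub>R f x)"
    unfolding cavg_adm by blast
  have "adm \<phi> J" using \<phi> assms(1) unfolding adm_def by auto
  then have z: "(1 / measure lebesgue J) *\<^sub>R (LINT x|lebesgue. \<phi> x *\<^sub>R f x) \<in> cavg f J"
    unfolding cavg_adm by blast
  have "y = (measure lebesgue J / measure lebesgue I) *\<^sub>R ((1 / measure lebesgue J) *\<^sub>R (LINT x|lebesgue. \<phi> x *\<^sub>R f x))"
    unfolding y using assms(3) by simp
  with z show "y \<in> (*\<^sub>R) (measure lebesgue J / measure lebesgue I) ` cavg f J" by blast
qed



lemma cavg_abscomb: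
  fixes f :: "'a::euclidean_space \<Rightarrow> 'b::euclidean_space" and y :: "'i \<Rightarrow> 'b"
  assumes "L1_loc f" "compact S" "finite T" "\<forall>k\<in>T. y k \<in> cavg f S" "(\<Sum>k\<in>T. \<bar>c k\<bar>) \<le> 1"
  shows "(\<Sum>k\<in>T. c k *\<^sub>R y k) \<in> cavg f S"
proof -
  have "\<forall>k\<in>T. \<exists>\<phi>. adm \<phi> S \<and> y k = (1 / measure lebesgue S) *\<^sub>R (LINT x|lebesgue. \<phi> x *\<^sub>R f x)"
    using assms(4) unfolding cavg_adm by blast
  then obtain \<Phi> where \<Phi>: "\<And>k. k \<in> T \<Longrightarrow> adm (\<Phi> k) S"
    "\<And>k. k \<in> T \<Longrightarrow> y k = (1 / measure lebesgue S) *\<^sub>R (LINT x|lebesgue. \<Phi> k x *\<^sub>R f x)"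
    by metis
  define \<psi> where "\<psi> x = (\<Sum>k\<in>T. c k * \<Phi> k x)" for x
  have meas: "\<psi> \<in> borel_measurable lebesgue" unfolding \<psi>_def
    using \<Phi>(1) unfolding adm_def by (intro borel_measurable_sum borel_measurable_times) auto
  have bnd: "\<bar>\<psi> x\<bar> \<le> 1" for x
  proof -
    have "\<bar>\<psi> x\<bar> \<le> (\<Sum>k\<in>T. \<bar>c k * \<Phi> k x\<bar>)" unfolding \<psi>_def by (rule sum_abs)
    also have "\<dots> \<le> (\<Sum>k\<in>T. \<bar>c k\<bar>)"
    proof (rule sum_mono)
      fix k assume "k \<in> T"
      then have "\<bar>\<Phi> k x\<bar> \<le> 1" using \<Phi>(1) unfolding adm_def by blast
      then show "\<bar>c k * \<Phi> k x\<bar> \<le> \<bar>c k\<bar>" by (simp add: abs_mult mult_left_le)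
    qed
    also have "\<dots> \<le> 1" by (rule assms(5))
    finally show ?thesis .
  qed
  have zero: "x \<notin> S \<Longrightarrow> \<psi> x = 0" for x
    using \<Phi>(1) unfolding adm_def \<psi>_def by simp
  have adm: "adm \<psi> S" unfolding adm_def using meas bnd zero by blast
  have int: "\<And>k. k \<in> T \<Longrightarrow> integrable lebesgue (\<lambda>x. \<Phi> k x *\<^sub>R f x)"
    using adm_integrable[OF assms(1,2) \<Phi>(1)] .
  have "(LINT x|lebesgue. \<psi> x *\<^sub>R f x) = (LINT x|lebesgue. (\<Sum>k\<in>T. c k *\<^sub>R (\<Phi> k x *\<^sub>R f x)))"
    unfolding \<psi>_def by (simp add: scaleR_sum_left)
  also have "\<dots> = (\<Sum>k\<in>T. (LINT x|lebesgue. c k *\<^sub>R (\<Phi> k x *\<^sub>R f x)))"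
    by (rule Bochner_Integration.integral_sum, rule integrable_scaleR_right, rule int)
  also have "\<dots> = (\<Sum>k\<in>T. c k *\<^sub>R (LINT x|lebesgue. \<Phi> k x *\<^sub>R f x))"
    by (rule sum.cong, rule refl, rule integral_scaleR_right)
  finally have eq: "(LINT x|lebesgue. \<psi> x *\<^sub>R f x) = (\<Sum>k\<in>T. c k *\<^sub>R (LINT x|lebesgue. \<Phi> k x *\<^sub>R f x))" .
  have "(\<Sum>k\<in>T. c k *\<^sub>R y k) = (1 / measure lebesgue S) *\<^sub>R (LINT x|lebesgue. \<psi> x *\<^sub>R f x)"
    unfolding eq scaleR_sum_right using \<Phi>(2) by (intro sum.cong) auto
  then show ?thesis using adm unfolding cavg_adm by blast
qed

lemma cavg_scale:
  assumes "L1_loc f" "compact S" "y \<in> cavg f S" "\<bar>t\<bar> \<le> 1"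
  shows "t *\<^sub>R y \<in> cavg f S"
  using cavg_abscomb[OF assms(1,2), of "{0::nat}" "\<lambda>_. y" "\<lambda>_. t"] assms(3,4) by simp

lemma cavg_zero:
  assumes "L1_loc f" "compact S"
  shows "0 \<in> cavg f S"
  using cavg_abscomb[OF assms(1,2), of "{}::nat set"] by simp

lemma cavg_sub_dil:
  assumes "L1_loc f" "compact S" "A \<ge> 1"
  shows "cavg f S \<subseteq> (*\<^sub>R) A ` cavg f S"
proof
  fix y assume y: "y \<in> cavg f S"
  have "(1 / A) *\<^sub>R y \<in> cavg f S" using cavg_scale[OF assms(1,2) y] assms(3) by simp
  moreover have "y = A *\<^sub>R ((1 / A) *\<^sub>R y)" using assms(3) by simp
  ultimately show "y \<in> (*\<^sub>R) A ` cavg f S" by blast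
qed



lemma dyadic_facts: fixes a :: "'a::euclidean_space"
  assumes "s > 0" "Q = cube a s" "dyadic_subcube I Q"
  shows "I \<subseteq> Q" "compact I" "measure lebesgue I > 0" "emeasure lebesgue I = ennreal (measure lebesgue I)"
proof -
  obtain k j where jb: "\<forall>i\<in>Basis. j i < (2::nat) ^ k" and I: "I = dcube a s k j"
    using assms(3) dyadic_iff[OF assms(1,2)] by blast
  show "I \<subseteq> Q" using dcube_subset_cube[OF assms(1) jb] I assms(2) by simp
  show "compact I" unfolding I dcube_def by (rule cube_compact)
  show "measure lebesgue I > 0" unfolding I measure_dcube[OF assms(1)] using assms(1) by simp
  show "emeasure lebesgue I = ennreal (measure lebesgue I)"
    unfolding I measure_dcube[OF assms(1)] emeasure_dcube[OF assms(1)] ..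
qed

lemma overlap_sum:
  fixes h :: "'a::euclidean_space \<Rightarrow> real"
  assumes "finite F" "\<forall>I\<in>F. I \<subseteq> Q" "\<forall>I\<in>F. \<forall>J\<in>F. I \<noteq> J \<longrightarrow> I \<inter> J \<in> null_sets lebesgue"
    "\<And>x. h x \<ge> 0" "integrable lebesgue (\<lambda>x. indicator Q x * h x)"
    "\<And>I. I \<in> F \<Longrightarrow> integrable lebesgue (\<lambda>x. indicator I x * h x)"
  shows "(\<Sum>I\<in>F. LINT x|lebesgue. indicator I x * h x) \<le> (LINT x|lebesgue. indicator Q x * h x)"
proof -
  define N where "N = (\<Union>I\<in>F. \<Union>J\<in>F - {I}. I \<inter> J)"
  have N: "N \<in> null_sets lebesgue" unfolding N_def
    using assms(1,3) by (intro null_sets.finite_UN) auto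
  have pt: "(\<Sum>I\<in>F. indicator I x * h x) \<le> indicator Q x * h x" if x: "x \<notin> N" for x
  proof (cases "\<exists>I\<in>F. x \<in> I")
    case True
    then obtain I0 where I0: "I0 \<in> F" "x \<in> I0" by blast
    have "x \<in> Q" using I0 assms(2) by blast
    have "(\<Sum>I\<in>F. indicator I x * h x) = indicator I0 x * h x + (\<Sum>I\<in>F - {I0}. indicator I x * h x)"
      by (rule sum.remove[OF assms(1) I0(1)])
    also have "(\<Sum>I\<in>F - {I0}. indicator I x * h x) = 0"
    proof (rule sum.neutral, rule ballI)
      fix J assume J: "J \<in> F - {I0}"
      then have "x \<notin> J" using x I0 unfolding N_def by blast
      then show "indicator J x * h x = 0" by simp
    qed
    finally show ?thesis using \<open>x \<in> Q\<close> I0 by simp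
  next
    case False
    then have "(\<Sum>I\<in>F. indicator I x * h x) = 0" by (intro sum.neutral) auto
    then show ?thesis using assms(4)[of x] by simp
  qed
  have "(\<Sum>I\<in>F. LINT x|lebesgue. indicator I x * h x) = (LINT x|lebesgue. (\<Sum>I\<in>F. indicator I x * h x))"
    by (rule Bochner_Integration.integral_sum[symmetric]) (rule assms(6))
  also have "\<dots> \<le> (LINT x|lebesgue. indicator Q x * h x)"
  proof (rule integral_mono_AE)
    show "integrable lebesgue (\<lambda>x. \<Sum>I\<in>F. indicator I x * h x)"
      by (rule Bochner_Integration.integrable_sum) (rule assms(6))
    show "integrable lebesgue (\<lambda>x. indicator Q x * h x)" by (rule assms(5))
    show "AE x in lebesgue. (\<Sum>I\<in>F. indicator I x * h x) \<le> indicator Q x * h x"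
      by (rule AE_I'[OF N]) (use pt in auto)
  qed
  finally show ?thesis .
qed



lemma framework:
  fixes f :: "'a::euclidean_space \<Rightarrow> 'b::euclidean_space"
    and A :: real and Q :: "'a set" and l :: "nat \<Rightarrow> 'b \<Rightarrow> real" and v :: "nat \<Rightarrow> 'b"
  assumes f: "L1_loc f" and s: "s > 0" and Q: "Q = cube a s" and A: "A > 0"
    and lin: "\<And>k. k < m \<Longrightarrow> linear (l k)"
    and F1: "\<And>y. y \<in> span (cavg f Q) \<Longrightarrow> y = (\<Sum>k<m. l k y *\<^sub>R v k)"
    and F2: "\<And>k. k < m \<Longrightarrow> (LINT x|lebesgue. indicator Q x * \<bar>l k (f x)\<bar>) \<le> M * measure lebesgue Q"
    and F3: "\<And>k. k < m \<Longrightarrow> v k \<in> cavg f Q"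
    and mM: "real m * M \<le> real (DIM('b)) ^ 2"
  defines "\<I> \<equiv> {I. dyadic_subcube I Q \<and> \<not> cavg f I \<subseteq> (*\<^sub>R) A ` cavg f Q \<and>
              (\<forall>J. dyadic_subcube J Q \<and> \<not> cavg f J \<subseteq> (*\<^sub>R) A ` cavg f Q \<and> I \<subseteq> J \<longrightarrow> J = I)}"
  shows "(\<Sum>\<^sub>\<infinity>I\<in>\<I>. emeasure lebesgue I) < ennreal (real (DIM('b)) ^ 2 / A) * emeasure lebesgue Q"
proof -
  let ?K = "cavg f Q"
  let ?n = "real (DIM('b))"
  have Qc: "compact Q" unfolding Q by (rule cube_compact)
  have muQ: "measure lebesgue Q = s ^ DIM('a)" unfolding Q using s by (intro measure_cube) auto
  have muQp: "measure lebesgue Q > 0" unfolding muQ using s by simp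
  have eQ: "emeasure lebesgue Q = ennreal (measure lebesgue Q)" unfolding Q
    using s emeasure_cube[of s a] measure_cube[of s a] by simp
  define h where "h x = (\<Sum>k<m. \<bar>l k (f x)\<bar>)" for x
  have h0: "h x \<ge> 0" for x unfolding h_def by (intro sum_nonneg) auto
  have hsplit: "indicator S x * h x = (\<Sum>k<m. indicator S x * \<bar>l k (f x)\<bar>)" for S x
    unfolding h_def by (rule sum_distrib_left)
  have hint: "integrable lebesgue (\<lambda>x. indicator S x * h x)" if "compact S" for S
    unfolding hsplit by (intro Bochner_Integration.integrable_sum abs_lin_integrable lin f that) auto
  have hI: "(LINT x|lebesgue. indicator S x * h x) = (\<Sum>k<m. LINT x|lebesgue. indicator S x * \<bar>l k (f x)\<bar>)"
    if "compact S" for S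
    unfolding hsplit by (intro Bochner_Integration.integral_sum abs_lin_integrable lin f that) auto
  \<comment> \<open>bad cubes carry large integral\<close>
  have bad: "A * measure lebesgue I < (LINT x|lebesgue. indicator I x * h x)" if I: "I \<in> \<I>" for I
  proof -
    have dI: "dyadic_subcube I Q" and nb: "\<not> cavg f I \<subseteq> (*\<^sub>R) A ` ?K" using I unfolding \<I>_def by auto
    note df = dyadic_facts[OF s Q dI]
    obtain y where y: "y \<in> cavg f I" "y \<notin> (*\<^sub>R) A ` ?K" using nb by blast
    have "y \<in> (*\<^sub>R) (measure lebesgue Q / measure lebesgue I) ` ?K"
      using cavg_sub[OF df(1) df(3) muQp] y(1) by blast
    then have yspan: "y \<in> span ?K" by (auto intro: span_mul span_base)
    have yrep: "y = (\<Sum>k<m. l k y *\<^sub>R v k)" by (rule F1[OF yspan])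
    have big: "A < (\<Sum>k<m. \<bar>l k y\<bar>)"
    proof (rule ccontr)
      assume "\<not> A < (\<Sum>k<m. \<bar>l k y\<bar>)"
      then have le: "(\<Sum>k<m. \<bar>l k y / A\<bar>) \<le> 1" using A
        by (simp add: sum_divide_distrib[symmetric])
      have "(\<Sum>k<m. (l k y / A) *\<^sub>R v k) \<in> ?K"
        by (rule cavg_abscomb[OF f Qc]) (use F3 le in auto)
      moreover have "(\<Sum>k<m. (l k y / A) *\<^sub>R v k) = (1 / A) *\<^sub>R y"
        by (subst yrep) (simp add: scaleR_sum_right)
      ultimately have "(1 / A) *\<^sub>R y \<in> ?K" by simp
      moreover have "y = A *\<^sub>R ((1 / A) *\<^sub>R y)" using A by simp
      ultimately have "y \<in> (*\<^sub>R) A ` ?K" by blast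
      with y(2) show False by blast
    qed
    also have "(\<Sum>k<m. \<bar>l k y\<bar>) \<le> (\<Sum>k<m. (1 / measure lebesgue I) * (LINT x|lebesgue. indicator I x * \<bar>l k (f x)\<bar>))"
      by (intro sum_mono cavg_bound[OF lin f df(2) df(3) y(1)]) auto
    also have "\<dots> = (1 / measure lebesgue I) * (LINT x|lebesgue. indicator I x * h x)"
      unfolding hI[OF df(2)] by (simp add: sum_distrib_left)
    finally show ?thesis using df(3) by (simp add: field_simps)
  qed
  \<comment> \<open>distinct members overlap in null sets\<close>
  have disj: "I \<inter> J \<in> null_sets lebesgue" if "I \<in> \<I>" "J \<in> \<I>" "I \<noteq> J" for I J
  proof -
    have "dyadic_subcube I Q" "dyadic_subcube J Q" using that unfolding \<I>_def by auto
    from dyadic_cases[OF s Q this] consider "I \<subseteq> J" | "J \<subseteq> I" | "I \<inter> J \<in> null_sets lebesgue" by blast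
    then show ?thesis
    proof cases
      case 1 then show ?thesis using that unfolding \<I>_def by blast
    next
      case 2 then show ?thesis using that unfolding \<I>_def by blast
    qed
  qed
  \<comment> \<open>total integral\<close>
  have HQ: "(LINT x|lebesgue. indicator Q x * h x) \<le> ?n ^ 2 * measure lebesgue Q"
  proof -
    have "(LINT x|lebesgue. indicator Q x * h x) \<le> (\<Sum>k<m. M * measure lebesgue Q)"
      unfolding hI[OF Qc] by (intro sum_mono F2) auto
    also have "\<dots> = real m * M * measure lebesgue Q" by simp
    also have "\<dots> \<le> ?n ^ 2 * measure lebesgue Q" using mM muQp by (intro mult_right_mono) auto
    finally show ?thesis .
  qed
  have mI: "emeasure lebesgue I = ennreal (measure lebesgue I)" if "I \<in> \<I>" for I
  proof -
    have "dyadic_subcube I Q" using that unfolding \<I>_def by blast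
    then show ?thesis by (rule dyadic_facts(4)[OF s Q])
  qed
  have dI: "dyadic_subcube I Q" if "I \<in> \<I>" for I using that unfolding \<I>_def by blast
  have sumF: "(\<Sum>I\<in>F. measure lebesgue I) \<le> (\<Sum>I\<in>F. (LINT x|lebesgue. indicator I x * h x) / A)"
    if "F \<subseteq> \<I>" for F
  proof (rule sum_mono)
    fix I assume "I \<in> F"
    then have "A * measure lebesgue I < (LINT x|lebesgue. indicator I x * h x)" using bad that by blast
    then show "measure lebesgue I \<le> (LINT x|lebesgue. indicator I x * h x) / A" using A
      by (simp add: field_simps)
  qed
  have sumH: "(\<Sum>I\<in>F. (LINT x|lebesgue. indicator I x * h x) / A) \<le> (LINT x|lebesgue. indicator Q x * h x) / A"
    if "F \<subseteq> \<I>" "finite F" for F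
  proof -
    have "(\<Sum>I\<in>F. (LINT x|lebesgue. indicator I x * h x)) \<le> (LINT x|lebesgue. indicator Q x * h x)"
    proof (rule overlap_sum[OF that(2) _ _ h0 hint[OF Qc]])
      show "\<forall>I\<in>F. I \<subseteq> Q" using that(1) dyadic_facts(1)[OF s Q dI] by blast
      show "\<forall>I\<in>F. \<forall>J\<in>F. I \<noteq> J \<longrightarrow> I \<inter> J \<in> null_sets lebesgue" using that(1) disj by blast
      fix I assume "I \<in> F"
      then have "I \<in> \<I>" using that(1) by blast
      then show "integrable lebesgue (\<lambda>x. indicator I x * h x)"
        by (intro hint dyadic_facts(2)[OF s Q dI])
    qed
    then show ?thesis using A by (simp add: sum_divide_distrib[symmetric] divide_right_mono)
  qed
  have RHS: "ennreal (?n ^ 2 / A) * emeasure lebesgue Q = ennreal (?n ^ 2 / A * measure lebesgue Q)"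
    unfolding eQ by (rule ennreal_mult[symmetric]) (use A muQp in auto)
  have RHSp: "?n ^ 2 / A * measure lebesgue Q > 0" using A muQp by simp
  have summ: "(\<lambda>I. emeasure lebesgue I) summable_on \<I>" by (rule nonneg_summable_on_complete) simp
  show ?thesis
  proof (cases "\<I> = {}")
    case True
    then show ?thesis unfolding RHS using RHSp by simp
  next
    case False
    then obtain I0 where I0: "I0 \<in> \<I>" by blast
    define \<delta> where "\<delta> = (LINT x|lebesgue. indicator I0 x * h x) / A - measure lebesgue I0"
    have \<delta>: "\<delta> > 0" unfolding \<delta>_def using bad[OF I0] A by (simp add: field_simps)
    have fin: "(\<Sum>I\<in>F. measure lebesgue I) \<le> (LINT x|lebesgue. indicator Q x * h x) / A - \<delta>"
      if "finite F" "F \<subseteq> \<I>" for F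
    proof -
      let ?G = "insert I0 F"
      have G: "finite ?G" "?G \<subseteq> \<I>" using that I0 by auto
      have "(\<Sum>I\<in>F. measure lebesgue I) \<le> (\<Sum>I\<in>?G. measure lebesgue I)"
        using G by (intro sum_mono2) auto
      also have "\<dots> = measure lebesgue I0 + (\<Sum>I\<in>?G - {I0}. measure lebesgue I)"
        by (rule sum.remove[OF G(1)]) simp
      also have "(\<Sum>I\<in>?G - {I0}. measure lebesgue I) \<le> (\<Sum>I\<in>?G - {I0}. (LINT x|lebesgue. indicator I x * h x) / A)"
        using G by (intro sumF) auto
      also have "measure lebesgue I0 + (\<Sum>I\<in>?G - {I0}. (LINT x|lebesgue. indicator I x * h x) / A)
          = (\<Sum>I\<in>?G. (LINT x|lebesgue. indicator I x * h x) / A) - \<delta>"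
        unfolding \<delta>_def sum.remove[OF G(1) insertI1, of "\<lambda>I. (LINT x|lebesgue. indicator I x * h x) / A"]
        by simp
      also have "\<dots> \<le> (LINT x|lebesgue. indicator Q x * h x) / A - \<delta>"
        using sumH[OF G(2,1)] by simp
      finally show ?thesis by simp
    qed
    have "(\<Sum>\<^sub>\<infinity>I\<in>\<I>. emeasure lebesgue I) \<le> ennreal ((LINT x|lebesgue. indicator Q x * h x) / A - \<delta>)"
    proof (rule infsum_le_finite_sums[OF summ])
      fix F assume F: "finite F" "F \<subseteq> \<I>"
      have "(\<Sum>I\<in>F. emeasure lebesgue I) = (\<Sum>I\<in>F. ennreal (measure lebesgue I))"
        using F mI by (intro sum.cong) auto
      also have "\<dots> = ennreal (\<Sum>I\<in>F. measure lebesgue I)" by (rule sum_ennreal) simp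
      also have "\<dots> \<le> ennreal ((LINT x|lebesgue. indicator Q x * h x) / A - \<delta>)"
        using fin[OF F] by (rule ennreal_leI)
      finally show "(\<Sum>I\<in>F. emeasure lebesgue I) \<le> ennreal ((LINT x|lebesgue. indicator Q x * h x) / A - \<delta>)" .
    qed
    also have "\<dots> < ennreal (?n ^ 2 / A * measure lebesgue Q)"
    proof (rule ennreal_lessI[OF RHSp])
      have "(LINT x|lebesgue. indicator Q x * h x) / A \<le> ?n ^ 2 * measure lebesgue Q / A"
        using HQ A by (intro divide_right_mono) auto
      then show "(LINT x|lebesgue. indicator Q x * h x) / A - \<delta> < ?n ^ 2 / A * measure lebesgue Q"
        using \<delta> by simp
    qed
    finally show ?thesis unfolding RHS .
  qed
qed



definition Dm :: "nat \<Rightarrow> (nat \<Rightarrow> nat \<Rightarrow> real) \<Rightarrow> real" where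
  "Dm m r = Determinant.det (Matrix.mat m m (\<lambda>(i,j). r i j))"

lemma Dm_leibniz: "Dm m r = (\<Sum>p | p permutes {0..<m}. of_int (sign p) * (\<Prod>i = 0..<m. r i (p i)))"
  unfolding Dm_def det_def'[OF mat_carrier]
proof (rule sum.cong[OF refl])
  fix p assume "p \<in> {p. p permutes {0..<m}}"
  then have p: "p permutes {0..<m}" by simp
  have "i < m \<Longrightarrow> p i < m" for i using permutes_in_image[OF p, of i] by simp
  then show "of_int (sign p) * (\<Prod>i = 0..<m. Matrix.mat m m (\<lambda>(i, j). r i j) $$ (i, p i)) =
        of_int (sign p) * (\<Prod>i = 0..<m. r i (p i))"
    by (intro arg_cong2[where f="(*)"] refl prod.cong) auto
qed

lemma Dm_cong: assumes "\<And>i j. i < m \<Longrightarrow> j < m \<Longrightarrow> r i j = r' i j" shows "Dm m r = Dm m r'"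
  unfolding Dm_leibniz
proof (rule sum.cong[OF refl])
  fix p assume "p \<in> {p. p permutes {0..<m}}"
  then have p: "p permutes {0..<m}" by simp
  have "i < m \<Longrightarrow> p i < m" for i using permutes_in_image[OF p, of i] by simp
  then show "of_int (sign p) * (\<Prod>i = 0..<m. r i (p i)) = of_int (sign p) * (\<Prod>i = 0..<m. r' i (p i))"
    using assms by (intro arg_cong2[where f="(*)"] refl prod.cong) auto
qed

lemma Dm_row_lin:
  assumes "finite L" "k < m"
  shows "Dm m (r(k := (\<lambda>j. \<Sum>l\<in>L. c l * s l j))) = (\<Sum>l\<in>L. c l * Dm m (r(k := s l)))"
proof -
  define R where "R p = (\<Prod>i\<in>{0..<m} - {k}. r i (p i))" for p :: "nat \<Rightarrow> nat"
  have pr: "(\<Prod>i = 0..<m. (r(k := X)) i (p i)) = X (p k) * R p" for X p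
  proof -
    have "(\<Prod>i = 0..<m. (r(k := X)) i (p i)) = (r(k := X)) k (p k) * (\<Prod>i\<in>{0..<m} - {k}. (r(k := X)) i (p i))"
      by (rule prod.remove) (use assms(2) in auto)
    also have "(\<Prod>i\<in>{0..<m} - {k}. (r(k := X)) i (p i)) = R p" unfolding R_def by (rule prod.cong) auto
    finally show ?thesis by simp
  qed
  let ?P = "{p. p permutes {0..<m}}"
  have "Dm m (r(k := (\<lambda>j. \<Sum>l\<in>L. c l * s l j))) = (\<Sum>p\<in>?P. of_int (sign p) * ((\<Sum>l\<in>L. c l * s l (p k)) * R p))"
    unfolding Dm_leibniz pr ..
  also have "\<dots> = (\<Sum>p\<in>?P. \<Sum>l\<in>L. c l * (of_int (sign p) * (s l (p k) * R p)))"
    by (rule sum.cong[OF refl]) (simp add: sum_distrib_left sum_distrib_right mult_ac)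
  also have "\<dots> = (\<Sum>l\<in>L. \<Sum>p\<in>?P. c l * (of_int (sign p) * (s l (p k) * R p)))"
    by (rule sum.swap)
  also have "\<dots> = (\<Sum>l\<in>L. c l * Dm m (r(k := s l)))"
    unfolding Dm_leibniz pr by (simp add: sum_distrib_left)
  finally show ?thesis .
qed

lemma Dm_eq_rows:
  assumes "k < m" "l < m" "k \<noteq> l" "\<And>j. j < m \<Longrightarrow> r k j = r l j"
  shows "Dm m r = 0"
  unfolding Dm_def
proof (rule det_identical_rows[OF mat_carrier assms(3,1,2)])
  show "Matrix.row (Matrix.mat m m (\<lambda>(i, j). r i j)) k = Matrix.row (Matrix.mat m m (\<lambda>(i, j). r i j)) l"
    using assms by (intro eq_vecI) auto
qed

lemma Dm_comb:
  assumes "k < m"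
  shows "Dm m (r(k := (\<lambda>j. \<Sum>l<m. c l * r l j))) = c k * Dm m r"
proof -
  have "Dm m (r(k := (\<lambda>j. \<Sum>l<m. c l * r l j))) = (\<Sum>l<m. c l * Dm m (r(k := r l)))"
    by (rule Dm_row_lin) (use assms in auto)
  also have "\<dots> = (\<Sum>l<m. if l = k then c k * Dm m r else 0)"
  proof (rule sum.cong[OF refl])
    fix l assume l: "l \<in> {..<m}"
    show "c l * Dm m (r(k := r l)) = (if l = k then c k * Dm m r else 0)"
    proof (cases "l = k")
      case True then show ?thesis by simp
    next
      case False
      have "Dm m (r(k := r l)) = 0" by (rule Dm_eq_rows[of k m l]) (use assms l False in auto)
      then show ?thesis using False by simp
    qed
  qed
  also have "\<dots> = c k * Dm m r" using assms by simp
  finally show ?thesis .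
qed

lemma Dm_one: "Dm m (\<lambda>i j. if i = j then 1 else 0) = 1"
proof -
  have "Matrix.mat m m (\<lambda>(i, j). if i = j then 1 else 0) = (1\<^sub>m m :: real mat)" by (intro eq_matI) auto
  then show ?thesis unfolding Dm_def by simp
qed

lemma Dm_bound:
  assumes "\<And>i j. i < m \<Longrightarrow> j < m \<Longrightarrow> \<bar>r i j\<bar> \<le> G"
  shows "\<bar>Dm m r\<bar> \<le> real (card {p. p permutes {0..<m}}) * G ^ m"
proof -
  let ?P = "{p. p permutes {0..<m}}"
  have "\<bar>Dm m r\<bar> \<le> (\<Sum>p\<in>?P. \<bar>of_int (sign p) * (\<Prod>i = 0..<m. r i (p i))\<bar>)"
    unfolding Dm_leibniz by (rule sum_abs)
  also have "\<dots> \<le> (\<Sum>p\<in>?P. G ^ m)"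
  proof (rule sum_mono)
    fix p assume "p \<in> ?P"
    then have p: "p permutes {0..<m}" by simp
    have pi: "i < m \<Longrightarrow> p i < m" for i using permutes_in_image[OF p, of i] by simp
    have "\<bar>of_int (sign p) * (\<Prod>i = 0..<m. r i (p i))\<bar> = (\<Prod>i = 0..<m. \<bar>r i (p i)\<bar>)"
      by (simp add: abs_mult abs_prod sign_def)
    also have "\<dots> \<le> (\<Prod>i = 0..<m. G)"
      by (rule prod_mono) (use assms pi in auto)
    also have "\<dots> = G ^ m" by simp
    finally show "\<bar>of_int (sign p) * (\<Prod>i = 0..<m. r i (p i))\<bar> \<le> G ^ m" .
  qed
  also have "\<dots> = real (card ?P) * G ^ m" by simp
  finally show ?thesis .
qed



lemma lin_real_sum: "linear g \<Longrightarrow> (g :: 'b::real_vector \<Rightarrow> real) (\<Sum>j\<in>T. c j *\<^sub>R w j) = (\<Sum>j\<in>T. c j * g (w j))"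
  by (simp add: linear_sum linear_scale)

lemma construction_ge2:
  fixes f :: "'a::euclidean_space \<Rightarrow> 'b::euclidean_space"
  assumes f: "L1_loc f" and Qc: "compact Q" and muQ: "measure lebesgue Q > 0" and n2: "DIM('b) \<ge> 2"
  shows "\<exists>m l v M. (\<forall>k<m. linear (l k)) \<and> (\<forall>y\<in>span (cavg f Q). y = (\<Sum>k<m. l k y *\<^sub>R v k)) \<and>
    (\<forall>k<m. (LINT x|lebesgue. indicator Q x * \<bar>l k (f x)\<bar>) \<le> M * measure lebesgue Q) \<and>
    (\<forall>k<m. v k \<in> cavg f Q) \<and> real m * M \<le> real (DIM('b)) ^ 2"
proof -
  let ?K = "cavg f Q"
  obtain B where B: "B \<subseteq> ?K" "independent B" "?K \<subseteq> span B"
    using maximal_independent_subset[of ?K] by blast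
  have finB: "finite B" and cardB: "card B \<le> DIM('b)" using independent_bound[OF B(2)] by auto
  define m where "m = card B"
  obtain u where u: "bij_betw u {0..<m} B" using ex_bij_betw_nat_finite[OF finB] unfolding m_def by blast
  have uB: "u i \<in> B" if "i < m" for i using bij_betwE[OF u] that by simp
  have uinj: "u i = u j \<longleftrightarrow> i = j" if "i < m" "j < m" for i j
    using bij_betw_imp_inj_on[OF u] that unfolding inj_on_def by (metis atLeastLessThan_iff zero_le)
  have "\<exists>g. linear g \<and> (\<forall>x\<in>B. g x = (if x = u j then 1 else (0::real)))" for j
    by (rule linear_independent_extend[OF B(2)])
  then have "\<forall>j. \<exists>g. linear g \<and> (\<forall>x\<in>B. g x = (if x = u j then 1 else (0::real)))" by blast
  from choice[OF this] obtain G where G: "\<forall>j. linear (G j) \<and> (\<forall>x\<in>B. G j x = (if x = u j then 1 else (0::real)))"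
    by blast
  have Glin: "\<And>j. linear (G j)" and GB: "\<And>j x. x \<in> B \<Longrightarrow> G j x = (if x = u j then 1 else 0)"
    using G by auto
  have Gu: "i < m \<Longrightarrow> j < m \<Longrightarrow> G j (u i) = (if i = j then 1 else 0)" for i j
    using GB[OF uB[of i]] uinj by simp
  define D where "D w = Dm m (\<lambda>i j. G j (w i))" for w :: "nat \<Rightarrow> 'b"
  have D1: "D u = 1"
  proof -
    have "D u = Dm m (\<lambda>i j. if i = j then 1 else 0)" unfolding D_def by (rule Dm_cong) (simp add: Gu)
    then show ?thesis by (simp add: Dm_one)
  qed
  define Gm where "Gm = (\<Sum>j<m. (1 / measure lebesgue Q) * (LINT x|lebesgue. indicator Q x * \<bar>G j (f x)\<bar>))"
  have Gb: "\<bar>G j y\<bar> \<le> Gm" if "y \<in> ?K" "j < m" for y j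
  proof -
    have "\<bar>G j y\<bar> \<le> (1 / measure lebesgue Q) * (LINT x|lebesgue. indicator Q x * \<bar>G j (f x)\<bar>)"
      by (rule cavg_bound[OF Glin f Qc muQ that(1)])
    also have "\<dots> \<le> Gm" unfolding Gm_def
      by (rule member_le_sum) (use that(2) muQ in \<open>auto intro!: mult_nonneg_nonneg integral_nonneg\<close>)
    finally show ?thesis .
  qed
  define W where "W = {w. \<forall>i<m. w i \<in> ?K}"
  define C where "C = real (card {p. p permutes {0..<m}}) * Gm ^ m"
  have Dbound: "\<bar>D w\<bar> \<le> C" if "w \<in> W" for w
    unfolding D_def C_def by (rule Dm_bound) (use that Gb in \<open>auto simp: W_def\<close>)
  define S where "S = Sup ((\<lambda>w. \<bar>D w\<bar>) ` W)"
  have bdd: "bdd_above ((\<lambda>w. \<bar>D w\<bar>) ` W)" using Dbound by (auto intro!: bdd_aboveI)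
  have uW: "u \<in> W" unfolding W_def using uB B(1) by auto
  have ge: "\<bar>D w\<bar> \<le> S" if "w \<in> W" for w unfolding S_def using bdd that by (intro cSup_upper) auto
  have S1: "1 \<le> S" using ge[OF uW] D1 by simp
  obtain v where vW: "v \<in> W" and vS: "S < 2 * \<bar>D v\<bar>"
  proof (rule ccontr)
    assume "\<not> thesis"
    with that have all: "\<And>w. w \<in> W \<Longrightarrow> \<bar>D w\<bar> \<le> S / 2" by force
    have "S \<le> S / 2" unfolding S_def[of] using uW all
      by (intro cSup_least) (auto simp: S_def)
    with S1 show False by simp
  qed
  have vK: "i < m \<Longrightarrow> v i \<in> ?K" for i using vW unfolding W_def by blast
  have Dv0: "D v \<noteq> 0" using vS S1 by auto
  have comb: "D (v(k := (\<Sum>j<m. c j *\<^sub>R v j))) = c k * D v" if k: "k < m" for k c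
  proof -
    let ?r = "\<lambda>i j. G j (v i)"
    have "D (v(k := (\<Sum>j<m. c j *\<^sub>R v j))) = Dm m (?r(k := (\<lambda>j. \<Sum>l<m. c l * ?r l j)))"
      unfolding D_def by (rule Dm_cong) (auto simp: lin_real_sum[OF Glin])
    also have "\<dots> = c k * Dm m ?r" by (rule Dm_comb[OF k])
    finally show ?thesis unfolding D_def .
  qed
  have vinj: "inj_on v {..<m}"
  proof (rule inj_onI, rule ccontr)
    fix i k assume ik: "i \<in> {..<m}" "k \<in> {..<m}" "v i = v k" "i \<noteq> k"
    define c where "c j = (if j = i then 1 else (0::real))" for j
    have "(\<Sum>j<m. c j *\<^sub>R v j) = (\<Sum>j<m. if j = i then v j else 0)" unfolding c_def by (intro sum.cong) auto
    also have "\<dots> = v k" using ik by simp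
    finally have "(\<Sum>j<m. c j *\<^sub>R v j) = v k" .
    then have "D v = c k * D v" using comb[of k c] ik by simp
    then have "D v = 0" using ik unfolding c_def by simp
    with Dv0 show False by simp
  qed
  let ?B' = "v ` {..<m}"
  have indep: "independent ?B'"
  proof
    assume "dependent ?B'"
    then obtain a where a: "a \<in> ?B'" "a \<in> span (?B' - {a})" unfolding dependent_def by blast
    then obtain k where k: "k < m" "a = v k" by blast
    have eqs: "?B' - {a} = v ` ({..<m} - {k})" using vinj k unfolding inj_on_def by auto
    have "a \<in> span (v ` ({..<m} - {k}))" using a(2) eqs by simp
    then have "a \<in> range (\<lambda>c. \<Sum>b\<in>v ` ({..<m} - {k}). c b *\<^sub>R b)"
      using span_finite[of "v ` ({..<m} - {k})"] by simp
    then obtain c where c: "a = (\<Sum>b\<in>v ` ({..<m} - {k}). c b *\<^sub>R b)" by blast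
    define c' where "c' j = (if j = k then 0 else c (v j))" for j
    have inj': "inj_on v ({..<m} - {k})" using vinj by (rule inj_on_subset) auto
    have "a = (\<Sum>j\<in>{..<m} - {k}. c (v j) *\<^sub>R v j)"
      unfolding c sum.reindex[OF inj'] by simp
    also have "\<dots> = (\<Sum>j<m. c' j *\<^sub>R v j)"
      using k unfolding c'_def by (intro sum.mono_neutral_cong_left) auto
    finally have h: "v k = (\<Sum>j<m. c' j *\<^sub>R v j)" using k by simp
    have "D v = D (v(k := (\<Sum>j<m. c' j *\<^sub>R v j)))" by (simp only: h[symmetric] fun_upd_triv)
    then have "D v = c' k * D v" using comb[OF k(1), of c'] by simp
    then show False using Dv0 unfolding c'_def by simp
  qed
  have spanB: "span B = span (span ?K)"
    unfolding span_span span_eq using B(1,3) span_superset by blast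
  have dimK: "dim (span ?K) = m" unfolding m_def by (rule dim_eq_card[OF spanB B(2)])
  have cardB': "card ?B' = m" using card_image[OF vinj] by simp
  have B'sub: "?B' \<subseteq> span ?K" using vK span_superset by blast
  have spanning: "span ?K \<subseteq> span ?B'"
    using card_eq_dim[OF B'sub] cardB' dimK indep by simp
  have rep: "\<exists>c. y = (\<Sum>j<m. c j *\<^sub>R v j)" if "y \<in> span ?K" for y
  proof -
    have "y \<in> span ?B'" using spanning that by blast
    then have "y \<in> range (\<lambda>c. \<Sum>b\<in>?B'. c b *\<^sub>R b)" using span_finite[of ?B'] by simp
    then obtain c where c: "y = (\<Sum>b\<in>?B'. c b *\<^sub>R b)" by blast
    have "y = (\<Sum>j<m. c (v j) *\<^sub>R v j)" unfolding c sum.reindex[OF vinj] by simp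
    then show ?thesis by (intro exI[of _ "\<lambda>j. c (v j)"])
  qed
  have "\<exists>g. linear g \<and> (\<forall>x\<in>?B'. g x = (if x = v k then 1 else (0::real)))" for k
    by (rule linear_independent_extend[OF indep])
  then have "\<forall>k. \<exists>g. linear g \<and> (\<forall>x\<in>?B'. g x = (if x = v k then 1 else (0::real)))" by blast
  from choice[OF this] obtain L where L: "\<forall>k. linear (L k) \<and> (\<forall>x\<in>?B'. L k x = (if x = v k then 1 else (0::real)))"
    by blast
  have Llin: "\<And>k. linear (L k)" and LB: "\<And>k x. x \<in> ?B' \<Longrightarrow> L k x = (if x = v k then 1 else 0)"
    using L by fast+
  have Lv: "L k (v j) = (if j = k then 1 else 0)" if "j < m" "k < m" for j k
    using LB[of "v j" k] that vinj unfolding inj_on_def by auto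
  have F1: "y = (\<Sum>k<m. L k y *\<^sub>R v k)" if yK: "y \<in> span ?K" for y
  proof -
    obtain c where c: "y = (\<Sum>j<m. c j *\<^sub>R v j)" using rep[OF yK] by blast
    have Ly: "L k y = c k" if "k < m" for k
    proof -
      have "L k y = (\<Sum>j<m. c j * L k (v j))" unfolding c by (rule lin_real_sum[OF Llin])
      also have "\<dots> = (\<Sum>j<m. if j = k then c k else 0)" using that by (intro sum.cong) (auto simp: Lv)
      also have "\<dots> = c k" using that by simp
      finally show ?thesis .
    qed
    have "(\<Sum>k<m. L k y *\<^sub>R v k) = (\<Sum>k<m. c k *\<^sub>R v k)" by (intro sum.cong) (auto simp: Ly)
    then show ?thesis using c by simp
  qed
  have Lb: "\<bar>L k y\<bar> \<le> 2" if y: "y \<in> ?K" and k: "k < m" for y k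
  proof -
    have yr: "y = (\<Sum>j<m. L j y *\<^sub>R v j)" using F1 span_superset y by blast
    have "D (v(k := y)) = D (v(k := (\<Sum>j<m. L j y *\<^sub>R v j)))" by (subst yr[symmetric]) (rule refl)
    then have "D (v(k := y)) = L k y * D v" using comb[OF k, of "\<lambda>j. L j y"] by simp
    moreover have "v(k := y) \<in> W" using vW y unfolding W_def by auto
    ultimately have "\<bar>L k y * D v\<bar> \<le> S" using ge[of "v(k := y)"] by simp
    then have "\<bar>L k y\<bar> * \<bar>D v\<bar> \<le> S" by (simp add: abs_mult)
    then have "\<bar>L k y\<bar> * \<bar>D v\<bar> \<le> 2 * \<bar>D v\<bar>" using vS by simp
    then show ?thesis using Dv0 by simp
  qed
  have F2: "(LINT x|lebesgue. indicator Q x * \<bar>L k (f x)\<bar>) \<le> 2 * measure lebesgue Q" if k: "k < m" for k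
  proof -
    obtain y0 where y0: "y0 \<in> ?K" "L k y0 = (1 / measure lebesgue Q) * (LINT x|lebesgue. indicator Q x * \<bar>L k (f x)\<bar>)"
      using cavg_sgn[OF Llin f Qc] by blast
    have "(LINT x|lebesgue. indicator Q x * \<bar>L k (f x)\<bar>) = measure lebesgue Q * L k y0"
      using y0(2) muQ by simp
    also have "\<dots> \<le> measure lebesgue Q * 2" using Lb[OF y0(1) k] muQ by (intro mult_left_mono) auto
    finally show ?thesis by simp
  qed
  have mM: "real m * 2 \<le> real (DIM('b)) ^ 2"
  proof -
    have "real m * 2 \<le> real (DIM('b)) * 2" using cardB unfolding m_def by simp
    also have "\<dots> \<le> real (DIM('b)) * real (DIM('b))" using n2 by (intro mult_left_mono) auto
    finally show ?thesis by (simp add: power2_eq_square)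
  qed
  show ?thesis
    by (rule exI[of _ m], rule exI[of _ L], rule exI[of _ v], rule exI[of _ 2])
       (use Llin F1 F2 vK mM in auto)
qed



lemma construction_1:
  fixes f :: "'a::euclidean_space \<Rightarrow> 'b::euclidean_space"
  assumes f: "L1_loc f" and Qc: "compact Q" and muQ: "measure lebesgue Q > 0" and n1: "DIM('b) = 1"
  shows "\<exists>m l v M. (\<forall>k<m. linear (l k)) \<and> (\<forall>y\<in>span (cavg f Q). y = (\<Sum>k<m. l k y *\<^sub>R v k)) \<and>
    (\<forall>k<m. (LINT x|lebesgue. indicator Q x * \<bar>l k (f x)\<bar>) \<le> M * measure lebesgue Q) \<and>
    (\<forall>k<m. v k \<in> cavg f Q) \<and> real m * M \<le> real (DIM('b)) ^ 2"
proof -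
  obtain b where B: "Basis = {b::'b}" using n1 by (metis card_1_singletonE)
  have rep: "y = (y \<bullet> b) *\<^sub>R b" for y :: 'b
  proof -
    have "y = (\<Sum>b\<in>Basis. (y \<bullet> b) *\<^sub>R b)" by (rule euclidean_representation[symmetric])
    also have "\<dots> = (y \<bullet> b) *\<^sub>R b" unfolding B by simp
    finally show ?thesis .
  qed
  have linb: "linear (\<lambda>y::'b. y \<bullet> b)" by (simp add: bounded_linear.linear bounded_linear_inner_left)
  define \<sigma> where "\<sigma> = (1 / measure lebesgue Q) * (LINT x|lebesgue. indicator Q x * \<bar>f x \<bullet> b\<bar>)"
  obtain y0 where y0: "y0 \<in> cavg f Q" "y0 \<bullet> b = \<sigma>" using cavg_sgn[OF linb f Qc] unfolding \<sigma>_def by blast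
  have bnd: "\<bar>z \<bullet> b\<bar> \<le> \<sigma>" if "z \<in> cavg f Q" for z
    using cavg_bound[OF linb f Qc muQ that] unfolding \<sigma>_def .
  have \<sigma>0: "\<sigma> \<ge> 0" using bnd[OF y0(1)] by simp
  show ?thesis
  proof (cases "\<sigma> = 0")
    case True
    have "cavg f Q \<subseteq> {0}"
    proof
      fix z assume "z \<in> cavg f Q"
      then have "z \<bullet> b = 0" using bnd True by fastforce
      then show "z \<in> {0}" using rep[of z] by simp
    qed
    then have "span (cavg f Q) \<subseteq> {0}" using span_mono[of "cavg f Q" "{0}"] by simp
    then have "\<forall>y\<in>span (cavg f Q). y = (\<Sum>k<0. (\<lambda>_. \<lambda>_. 0::real) k y *\<^sub>R (\<lambda>_. 0::'b) k)" by auto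
    then show ?thesis by (intro exI[of _ 0] exI[of _ "\<lambda>_. \<lambda>_. 0::real"] exI[of _ "\<lambda>_. 0::'b"] exI[of _ 0]) simp
  next
    case False
    then have \<sigma>p: "\<sigma> > 0" using \<sigma>0 by simp
    define l where "l = (\<lambda>(k::nat) (y::'b). (y \<bullet> b) / \<sigma>)"
    define v where "v = (\<lambda>k::nat. y0)"
    have "\<forall>k<1. linear (l k)" unfolding l_def
      using linear_compose_scale_right[OF linb] by (auto simp: divide_inverse linear_scale_self mult.commute
          intro: linear_compose[OF linb, unfolded o_def] linear_scaleR)
    moreover have "\<forall>y\<in>span (cavg f Q). y = (\<Sum>k<1. l k y *\<^sub>R v k)"
    proof
      fix y :: 'b
      have "y0 = \<sigma> *\<^sub>R b" using rep[of y0] y0(2) by simp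
      then show "y = (\<Sum>k<1. l k y *\<^sub>R v k)" unfolding l_def v_def using \<sigma>p rep[of y] by simp
    qed
    moreover have "\<forall>k<1. (LINT x|lebesgue. indicator Q x * \<bar>l k (f x)\<bar>) \<le> 1 * measure lebesgue Q"
    proof (intro allI impI)
      fix k :: nat
      have "(LINT x|lebesgue. indicator Q x * \<bar>l k (f x)\<bar>) = (LINT x|lebesgue. (1 / \<sigma>) * (indicator Q x * \<bar>f x \<bullet> b\<bar>))"
        unfolding l_def using \<sigma>p by (intro Bochner_Integration.integral_cong) (auto simp: abs_divide)
      also have "\<dots> = (1 / \<sigma>) * (LINT x|lebesgue. indicator Q x * \<bar>f x \<bullet> b\<bar>)" by simp
      also have "\<dots> = measure lebesgue Q" unfolding \<sigma>_def using muQ \<sigma>p \<sigma>_def by (simp add: field_simps)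
      finally show "(LINT x|lebesgue. indicator Q x * \<bar>l k (f x)\<bar>) \<le> 1 * measure lebesgue Q" by simp
    qed
    moreover have "\<forall>k<1. v k \<in> cavg f Q" unfolding v_def using y0 by simp
    moreover have "real 1 * 1 \<le> real (DIM('b)) ^ 2" using n1 by simp
    ultimately show ?thesis by blast
  qed
qed

lemma construction:
  fixes f :: "'a::euclidean_space \<Rightarrow> 'b::euclidean_space"
  assumes f: "L1_loc f" and Qc: "compact Q" and muQ: "measure lebesgue Q > 0"
  shows "\<exists>m l v M. (\<forall>k<m. linear (l k)) \<and> (\<forall>y\<in>span (cavg f Q). y = (\<Sum>k<m. l k y *\<^sub>R v k)) \<and>
    (\<forall>k<m. (LINT x|lebesgue. indicator Q x * \<bar>l k (f x)\<bar>) \<le> M * measure lebesgue Q) \<and>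
    (\<forall>k<m. v k \<in> cavg f Q) \<and> real m * M \<le> real (DIM('b)) ^ 2"
proof (cases "DIM('b) = 1")
  case True
  then show ?thesis using construction_1[OF assms] by blast
next
  case False
  then have "DIM('b) \<ge> 2" using DIM_positive[where 'a='b] by linarith
  then show ?thesis using construction_ge2[OF assms] by blast
qed

theorem lemma3p6:
  fixes f :: "'a::euclidean_space \<Rightarrow> 'b::euclidean_space"
    and A :: real and Q :: "'a set"
  assumes "A > real (DIM('b)) ^ 2" and "L1_loc f" and "is_cube Q"
  defines "\<I> \<equiv> {I. dyadic_subcube I Q \<and> \<not> cavg f I \<subseteq> (*\<^sub>R) A ` cavg f Q \<and>
              (\<forall>J. dyadic_subcube J Q \<and> \<not> cavg f J \<subseteq> (*\<^sub>R) A ` cavg f Q \<and> I \<subseteq> J \<longrightarrow> J = I)}"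
  shows "(\<forall>I\<in>\<I>. cavg f I \<subseteq> (*\<^sub>R) (2 ^ DIM('a) * A) ` cavg f Q) \<and>
         (\<Sum>\<^sub>\<infinity>I\<in>\<I>. emeasure lebesgue I) < ennreal (real (DIM('b)) ^ 2 / A) * emeasure lebesgue Q"
proof -
  obtain a s where s: "s > 0" and Q: "Q = cube a s" using assms(3) unfolding is_cube_def by blast
  have Qc: "compact Q" unfolding Q by (rule cube_compact)
  have muQ: "measure lebesgue Q > 0" unfolding Q using s measure_cube[of s a] by simp
  have n1: "real (DIM('b)) ^ 2 \<ge> 1" using DIM_positive[where 'a='b] by simp
  have A1: "A \<ge> 1" using assms(1) n1 by linarith
  have A0: "A > 0" using A1 by simp
  have part1: "cavg f I \<subseteq> (*\<^sub>R) (2 ^ DIM('a) * A) ` cavg f Q" if I: "I \<in> \<I>" for I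
  proof -
    have dI: "dyadic_subcube I Q" and nb: "\<not> cavg f I \<subseteq> (*\<^sub>R) A ` cavg f Q"
      and mx: "\<And>J. dyadic_subcube J Q \<Longrightarrow> \<not> cavg f J \<subseteq> (*\<^sub>R) A ` cavg f Q \<Longrightarrow> I \<subseteq> J \<Longrightarrow> J = I"
      using I unfolding \<I>_def by auto
    have "I \<noteq> Q" using nb cavg_sub_dil[OF assms(2) Qc A1] by blast
    then obtain J where J: "dyadic_subcube J Q" "I \<subseteq> J" "J \<noteq> I"
      "measure lebesgue J = 2 ^ DIM('a) * measure lebesgue I"
      using dyadic_parent[OF s Q dI] by blast
    have Jg: "cavg f J \<subseteq> (*\<^sub>R) A ` cavg f Q" using mx[OF J(1) _ J(2)] J(3) by blast
    have muI: "measure lebesgue I > 0" by (rule dyadic_facts(3)[OF s Q dI])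
    have muJ: "measure lebesgue J > 0" by (rule dyadic_facts(3)[OF s Q J(1)])
    show ?thesis
    proof
      fix y assume "y \<in> cavg f I"
      then obtain z where z: "z \<in> cavg f J" "y = (measure lebesgue J / measure lebesgue I) *\<^sub>R z"
        using cavg_sub[OF J(2) muI muJ] by blast
      obtain w where w: "w \<in> cavg f Q" "z = A *\<^sub>R w" using Jg z(1) by blast
      have "y = (2 ^ DIM('a) * A) *\<^sub>R w" unfolding z(2) w(2) J(4) using muI by simp
      then show "y \<in> (*\<^sub>R) (2 ^ DIM('a) * A) ` cavg f Q" using w(1) by blast
    qed
  qed
  obtain m l v M where c: "\<forall>k<m. linear (l k)" "\<forall>y\<in>span (cavg f Q). y = (\<Sum>k<m. l k y *\<^sub>R v k)"
    "\<forall>k<m. (LINT x|lebesgue. indicator Q x * \<bar>l k (f x)\<bar>) \<le> M * measure lebesgue Q"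
    "\<forall>k<m. v k \<in> cavg f Q" "real m * M \<le> real (DIM('b)) ^ 2"
    using construction[OF assms(2) Qc muQ] by blast
  have part2: "(\<Sum>\<^sub>\<infinity>I\<in>\<I>. emeasure lebesgue I) < ennreal (real (DIM('b)) ^ 2 / A) * emeasure lebesgue Q"
    unfolding \<I>_def by (rule framework[OF assms(2) s Q A0, of m l v M]) (use c in auto)
  show ?thesis using part1 part2 by blast
qed

end
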